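(* Let $d_1,\dots,d_n\ge1$, $\Delta=\Delta^{d_1}\times\cdots\times\Delta^{d_n}$, $N=\sum_i d_i$, and $f:\operatorname{vert}(\Delta)\to\mathbb{R}$. For $\boldsymbol{j}\in\mathcal{G}=\prod_i\{0,\dots,d_i\}$ let $\alpha(\boldsymbol{j})=f(\boldsymbol{v}_{1j_1},\dots,\boldsymbol{v}_{nj_n})$, and for $\pi\in\Pi$ with point representation $\boldsymbol{j}^0,\dots,\boldsymbol{j}^N$ let $f^\pi(\boldsymbol{z})=\alpha(\boldsymbol{j}^0)+\sum_{t\in[N]}(\alpha(\boldsymbol{j}^t)-\alpha(\boldsymbol{j}^{t-1}))z_{\pi_t}$. If $f$ is supermodular, then $$\operatorname{conv}\{(\boldsymbol{z},\mu)\in\operatorname{vert}(\Delta)\times\mathbb{R}:\mu\le f(\boldsymbol{z})\}=\{(\boldsymbol{z},\mu)\in\Delta\times\mathbb{R}:\mu\le f^\pi(\boldsymbol{z})\ \forall\pi\in\Pi\}.$$ If $f$ is submodular, then $\operatorname{conv}\{(\boldsymbol{z},\mu)\in\operatorname{vert}(\Delta)\times\mathbb{R}:\mu\ge f(\boldsymbol{z})\}=\{(\boldsymbol{z},\mu)\in\Delta\times\mathbb{R}:\mu\ge f^\pi(\boldsymbol{z})\ \forall\pi\in\Pi\}$.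
   Context: $\Delta^d=\{\boldsymbol{z}\in\mathbb{R}^d:1\ge z_1\ge\cdots\ge z_d\ge0\}$; variables $\boldsymbol{z}=(\boldsymbol{z}_1,\dots,\boldsymbol{z}_n)$, $\boldsymbol{z}_i=(z_{i1},\dots,z_{id_i})$. Vertices of $\Delta^{d_i}$: $\boldsymbol{v}_{i0}=\boldsymbol{0}$, $\boldsymbol{v}_{ij}$ = vector with first $j$ coordinates $1$ and the rest $0$; $\operatorname{vert}(\Delta)=\prod_i\{\boldsymbol{v}_{i0},\dots,\boldsymbol{v}_{id_i}\}$. Super/submodularity of $f$ is with respect to componentwise max/min on $\operatorname{vert}(\Delta)$ ($f(\boldsymbol{u}\vee\boldsymbol{w})+f(\boldsymbol{u}\wedge\boldsymbol{w})\ge f(\boldsymbol{u})+f(\boldsymbol{w})$ for supermodular, $\le$ for submodular). Staircase: $\pi=(\pi_1,\dots,\pi_N)$, $\pi_t=(\pi_t(1),\pi_t(2))$, $\pi_t(1)\in[n]$ occurring exactly $d_i$ times for each $i$, $\pi_t(2)=|\{s\le t:\pi_s(1)=\pi_t(1)\}|$; $\Pi$ the set of staircases; $z_{\pi_t}=z_{\pi_t(1),\pi_t(2)}$; point representation $\boldsymbol{j}^0=\boldsymbol{0}$, $\boldsymbol{j}^t=\boldsymbol{j}^{t-1}+\boldsymbol{e}_{\pi_t(1)}$. *)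

theory Defs
  imports "HOL-Analysis.Analysis" "HOL-Library.Function_Algebras"
begin

text \<open>Pointwise real vector space structure on functions (needed to use the
library's convex hull on points indexed by pairs (i,k)).\<close>

instantiation "fun" :: (type, real_vector) real_vector
begin
definition scaleR_fun :: "real \<Rightarrow> ('a \<Rightarrow> 'b) \<Rightarrow> 'a \<Rightarrow> 'b"
  where "scaleR_fun r f = (\<lambda>x. r *\<^sub>R f x)"
instance
  by standard (auto simp: scaleR_fun_def fun_eq_iff plus_fun_def scaleR_add_right scaleR_add_left)
end

text \<open>A point z = (z_1,...,z_n) with z_i \<in> R^{d_i} is encoded as a function
  z :: nat \<times> nat \<Rightarrow> real, z(i,k) = z_{i+1,k} for i < n and 1 \<le> k \<le> d i
  (blocks are indexed 0..n-1), and z(i,k) = 0 for all other index pairs.\<close>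

definition coords :: "nat \<Rightarrow> (nat \<Rightarrow> nat) \<Rightarrow> (nat \<times> nat) set" where
  "coords n d = {(i,k). i < n \<and> 1 \<le> k \<and> k \<le> d i}"

definition Delta :: "nat \<Rightarrow> (nat \<Rightarrow> nat) \<Rightarrow> (nat \<times> nat \<Rightarrow> real) set" where
  "Delta n d = {z. (\<forall>p. p \<notin> coords n d \<longrightarrow> z p = 0) \<and>
     (\<forall>i<n. 1 \<ge> z (i,1) \<and> (\<forall>k. 1 \<le> k \<and> k < d i \<longrightarrow> z (i,k) \<ge> z (i,Suc k)) \<and> z (i, d i) \<ge> 0)}"

definition grid :: "nat \<Rightarrow> (nat \<Rightarrow> nat) \<Rightarrow> (nat \<Rightarrow> nat) set" where
  "grid n d = {j. (\<forall>i<n. j i \<le> d i) \<and> (\<forall>i\<ge>n. j i = 0)}"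

definition vtx :: "nat \<Rightarrow> (nat \<Rightarrow> nat) \<Rightarrow> (nat \<Rightarrow> nat) \<Rightarrow> (nat \<times> nat \<Rightarrow> real)" where
  "vtx n d j = (\<lambda>(i,k). if (i,k) \<in> coords n d \<and> k \<le> j i then 1 else 0)"

definition vert :: "nat \<Rightarrow> (nat \<Rightarrow> nat) \<Rightarrow> (nat \<times> nat \<Rightarrow> real) set" where
  "vert n d = vtx n d ` grid n d"

definition supermodular_on_vert :: "nat \<Rightarrow> (nat \<Rightarrow> nat) \<Rightarrow> ((nat \<times> nat \<Rightarrow> real) \<Rightarrow> real) \<Rightarrow> bool" where
  "supermodular_on_vert n d f = (\<forall>u\<in>vert n d. \<forall>w\<in>vert n d.
      f (sup u w) + f (inf u w) \<ge> f u + f w)"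

definition submodular_on_vert :: "nat \<Rightarrow> (nat \<Rightarrow> nat) \<Rightarrow> ((nat \<times> nat \<Rightarrow> real) \<Rightarrow> real) \<Rightarrow> bool" where
  "submodular_on_vert n d f = (\<forall>u\<in>vert n d. \<forall>w\<in>vert n d.
      f (sup u w) + f (inf u w) \<le> f u + f w)"

text \<open>Staircases: the sequence of first components pi_1(1), ..., pi_N(1), as a list
  of block indices (0-based) in which block i occurs exactly d i times.\<close>
definition staircases :: "nat \<Rightarrow> (nat \<Rightarrow> nat) \<Rightarrow> nat list set" where
  "staircases n d = {p. set p \<subseteq> {..<n} \<and> (\<forall>i<n. count_list p i = d i)}"

text \<open>Point representation j^t (t = 0..N): j^t(i) = number of occurrences of i among
  the first t entries. The second component pi_t(2) equals j^t(pi_t(1)).\<close>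
definition jpt :: "nat list \<Rightarrow> nat \<Rightarrow> nat \<Rightarrow> nat" where
  "jpt p t = (\<lambda>i. count_list (take t p) i)"

definition alpha :: "nat \<Rightarrow> (nat \<Rightarrow> nat) \<Rightarrow> ((nat \<times> nat \<Rightarrow> real) \<Rightarrow> real) \<Rightarrow> (nat \<Rightarrow> nat) \<Rightarrow> real" where
  "alpha n d f j = f (vtx n d j)"

definition fpi :: "nat \<Rightarrow> (nat \<Rightarrow> nat) \<Rightarrow> ((nat \<times> nat \<Rightarrow> real) \<Rightarrow> real) \<Rightarrow> nat list
    \<Rightarrow> (nat \<times> nat \<Rightarrow> real) \<Rightarrow> real" where
  "fpi n d f p z = alpha n d f (jpt p 0) +
     (\<Sum>t\<in>{1..length p}. (alpha n d f (jpt p t) - alpha n d f (jpt p (t - 1))) *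
        z (p ! (t - 1), jpt p t (p ! (t - 1))))"

end

theory Submission
  imports Defs
begin

lemma sum_fun_apply: "(sum f A) x = sum (\<lambda>a. f a x) A"
  by (induction A rule: infinite_finite_induct) (auto simp: plus_fun_def)

lemma count_take_le: "count_list (take t xs) i \<le> count_list xs i"
  by (induction xs arbitrary: t) (auto simp: take_Cons split: nat.splits)

lemma jpt_mono: "t \<le> t' \<Longrightarrow> jpt p t i \<le> jpt p t' i"
  unfolding jpt_def using count_take_le[of t "take t' p" i] by (simp add: min_def)

lemma jpt_Suc: "t < length p \<Longrightarrow> jpt p (Suc t) = (jpt p t)(p!t := jpt p t (p!t) + 1)"
  unfolding jpt_def by (auto simp: take_Suc_conv_app_nth fun_eq_iff)

lemma jpt_0: "jpt p 0 = (\<lambda>_. 0)" unfolding jpt_def by (simp add: fun_eq_iff)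

lemma jpt_len: "jpt p (length p) = count_list p" unfolding jpt_def by (simp add: fun_eq_iff)

lemma jpt_grid: assumes "p \<in> staircases n d" shows "jpt p t \<in> grid n d"
proof -
  have "jpt p t i \<le> d i" if "i < n" for i
    using assms that count_take_le[of t p i] by (auto simp: staircases_def jpt_def)
  moreover have "jpt p t i = 0" if "i \<ge> n" for i
  proof -
    have "i \<notin> set p" using assms that by (auto simp: staircases_def)
    hence "i \<notin> set (take t p)" using in_set_takeD by metis
    thus ?thesis by (simp add: jpt_def count_list_0_iff)
  qed
  ultimately show ?thesis by (auto simp: grid_def)
qed

lemma vtx_sup: "sup (vtx n d j) (vtx n d j') = vtx n d (\<lambda>i. max (j i) (j' i))"
  by (auto simp: vtx_def fun_eq_iff sup_max inf_min)

lemma vtx_inf: "inf (vtx n d j) (vtx n d j') = vtx n d (\<lambda>i. min (j i) (j' i))"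
  by (auto simp: vtx_def fun_eq_iff sup_max inf_min)

lemma vtx_Delta: "vtx n d j \<in> Delta n d"
  by (auto simp: vtx_def Delta_def coords_def)

lemma vert_Delta: "vert n d \<subseteq> Delta n d"
  using vtx_Delta by (auto simp: vert_def)

lemma Delta_mono: assumes "z \<in> Delta n d" "i < n" "1 \<le> k" "k + m \<le> d i"
  shows "z (i, k+m) \<le> z (i,k)"
  using assms(4)
proof (induction m)
  case 0 then show ?case by simp
next
  case (Suc m)
  have "z (i, Suc (k+m)) \<le> z (i, k+m)" using assms Suc.prems by (auto simp: Delta_def)
  then show ?case using Suc by simp
qed

lemma Delta_range: assumes "z \<in> Delta n d" "(i,k) \<in> coords n d"
  shows "0 \<le> z (i,k) \<and> z (i,k) \<le> 1"
proof -
  have ik: "i < n" "1 \<le> k" "k \<le> d i" using assms(2) by (auto simp: coords_def)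
  have "z (i, 1 + (k-1)) \<le> z (i,1)" using Delta_mono[OF assms(1) ik(1), of 1 "k-1"] ik by simp
  moreover have "z (i, k + (d i - k)) \<le> z (i,k)" using Delta_mono[OF assms(1) ik(1) ik(2), of "d i - k"] ik by simp
  ultimately show ?thesis using assms(1) ik by (auto simp: Delta_def)
qed

lemma telescope1: "(\<Sum>t\<in>{1..N::nat}. g t - g (t - 1)) = g N - (g 0 :: real)"
  by (induction N) (auto simp: sum.cl_ivl_Suc)

lemma abel: "(\<Sum>t\<in>{0..N}. (w t - w (Suc t)) * a t) =
   w 0 * a 0 + (\<Sum>t\<in>{1..N}. (a t - a (t-1)) * w t) - w (Suc N) * (a N :: real)"
  by (induction N) (auto simp: sum.cl_ivl_Suc algebra_simps)

lemma telescope2: "T \<le> N \<Longrightarrow> (\<Sum>t\<in>{0..N}. (if T \<le> t then w t - w (Suc t) else 0)) = w T - (w (Suc N) :: real)"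
proof (induction N)
  case 0 then show ?case by simp
next
  case (Suc N)
  show ?case
  proof (cases "T \<le> N")
    case True then show ?thesis using Suc by (simp add: sum.cl_ivl_Suc)
  next
    case False
    hence "T = Suc N" using Suc by simp
    moreover have "(\<Sum>t\<in>{0..N}. (if T \<le> t then w t - w (Suc t) else 0)) = 0"
      using False by (intro sum.neutral) auto
    ultimately show ?thesis by (simp add: sum.cl_ivl_Suc)
  qed
qed


lemma greedy:
  assumes "\<forall>i<n. \<forall>k. 1 \<le> k \<and> k < d i \<longrightarrow> z (i, Suc k) \<le> (z (i,k) :: real)"
  shows "\<exists>p. set p \<subseteq> {..<n} \<and> (\<forall>i<n. count_list p i = d i) \<and>
    (\<forall>t. Suc t < length p \<longrightarrow> z (p!(Suc t), jpt p (Suc (Suc t)) (p!(Suc t))) \<le> z (p!t, jpt p (Suc t) (p!t)))"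
  using assms
proof (induction "\<Sum>i<n. d i" arbitrary: d)
  case 0
  then show ?case by (intro exI[of _ "[]"]) auto
next
  case (Suc s)
  define S where "S = {i. i < n \<and> 1 \<le> d i}"
  have "S \<noteq> {}"
  proof
    assume "S = {}"
    hence "\<forall>i<n. d i = 0" by (auto simp: S_def)
    thus False using Suc.hyps(2) by simp
  qed
  have fS: "finite S" by (auto simp: S_def)
  define m where "m = Min ((\<lambda>i. z (i, d i)) ` S)"
  have "m \<in> (\<lambda>i. z (i, d i)) ` S" unfolding m_def using fS \<open>S \<noteq> {}\<close> by (intro Min_in) auto
  then obtain i0 where i0: "i0 \<in> S" "z (i0, d i0) = m" by auto
  have mmin: "m \<le> z (i, d i)" if "i \<in> S" for i unfolding m_def using fS that by (intro Min_le) auto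
  define d' where "d' = d(i0 := d i0 - 1)"
  have i0n: "i0 < n" "1 \<le> d i0" using i0 by (auto simp: S_def)
  have "(\<Sum>i<n. d i) = (\<Sum>i<n. d' i) + 1"
  proof -
    have "(\<Sum>i<n. d i) = d i0 + (\<Sum>i\<in>{..<n}-{i0}. d i)" using i0n by (simp add: sum.remove)
    moreover have "(\<Sum>i<n. d' i) = d' i0 + (\<Sum>i\<in>{..<n}-{i0}. d' i)" using i0n by (simp add: sum.remove)
    moreover have "(\<Sum>i\<in>{..<n}-{i0}. d' i) = (\<Sum>i\<in>{..<n}-{i0}. d i)" by (intro sum.cong) (auto simp: d'_def)
    ultimately show ?thesis using i0n by (simp add: d'_def)
  qed
  hence "s = (\<Sum>i<n. d' i)" using Suc.hyps(2) by simp
  moreover have "\<forall>i<n. \<forall>k. 1 \<le> k \<and> k < d' i \<longrightarrow> z (i, Suc k) \<le> z (i,k)"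
    using Suc.prems by (auto simp: d'_def)
  ultimately obtain p' where p': "set p' \<subseteq> {..<n}" "\<forall>i<n. count_list p' i = d' i"
    "\<forall>t. Suc t < length p' \<longrightarrow> z (p'!(Suc t), jpt p' (Suc (Suc t)) (p'!(Suc t))) \<le> z (p'!t, jpt p' (Suc t) (p'!t))"
    using Suc.hyps(1) by blast
  define p where "p = p' @ [i0]"
  have "set p \<subseteq> {..<n}" using p' i0n by (auto simp: p_def)
  moreover have "\<forall>i<n. count_list p i = d i" using p' i0n by (auto simp: p_def d'_def)
  moreover have "z (p!(Suc t), jpt p (Suc (Suc t)) (p!(Suc t))) \<le> z (p!t, jpt p (Suc t) (p!t))"
    if "Suc t < length p" for t
  proof (cases "Suc t < length p'")
    case True
    then show ?thesis using p'(3) by (simp add: p_def jpt_def nth_append)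
  next
    case False
    hence tl: "Suc t = length p'" using that by (simp add: p_def)
    have e1: "p!(Suc t) = i0" using tl by (simp add: p_def nth_append)
    have e2: "jpt p (Suc (Suc t)) i0 = d i0"
      using tl p' i0n by (simp add: p_def jpt_def d'_def)
    define i' where "i' = p'!t"
    have e3: "p!t = i'" using tl by (simp add: p_def nth_append i'_def)
    have e4: "jpt p (Suc t) i' = d' i'"
    proof -
      have "i' \<in> set p'" using tl by (simp add: i'_def)
      hence "i' < n" using p' by auto
      thus ?thesis using tl p' by (simp add: p_def jpt_def)
    qed
    have i'set: "i' \<in> set p'" using tl by (simp add: i'_def)
    hence i'n: "i' < n" using p' by auto
    have cnt: "1 \<le> count_list p' i'" using i'set count_list_0_iff[of p' i'] by linarith
    show ?thesis
    proof (cases "i' = i0")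
      case True
      have "1 \<le> d' i0" "d' i0 < d i0" using cnt p' True i0n by (auto simp: d'_def)
      hence "z (i0, Suc (d' i0)) \<le> z (i0, d' i0)"
        using Suc.prems i0n by blast
      moreover have "Suc (d' i0) = d i0" using i0n by (simp add: d'_def)
      ultimately show ?thesis using e1 e2 e3 e4 True by simp
    next
      case False
      have "i' \<in> S" using cnt p' i'n False by (auto simp: S_def d'_def)
      hence "z (i0, d i0) \<le> z (i', d' i')" using mmin i0 False by (simp add: d'_def)
      thus ?thesis using e1 e2 e3 e4 by simp
    qed
  qed
  ultimately show ?case by blast
qed


lemma coordsI: "i < n \<Longrightarrow> 1 \<le> k \<Longrightarrow> k \<le> d i \<Longrightarrow> (i,k) \<in> coords n d"
  by (simp add: coords_def)

lemma stair_nth: "p \<in> staircases n d \<Longrightarrow> t < length p \<Longrightarrow> p!t < n"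
  by (auto simp: staircases_def dest!: nth_mem)

lemma stair_coord: assumes "p \<in> staircases n d" "s < length p"
  shows "(p!s, jpt p (Suc s) (p!s)) \<in> coords n d"
proof -
  have "jpt p (Suc s) \<in> grid n d" by (rule jpt_grid[OF assms(1)])
  hence "jpt p (Suc s) (p!s) \<le> d (p!s)" using stair_nth[OF assms] by (auto simp: grid_def)
  thus ?thesis using stair_nth[OF assms] jpt_Suc[OF assms(2)] by (auto simp: coords_def)
qed

lemma coreA:
  assumes sm: "supermodular_on_vert n d f" and p: "p \<in> staircases n d" and j: "j \<in> grid n d"
  shows "f (vtx n d j) \<le> fpi n d f p (vtx n d j)"
proof -
  define J where "J = jpt p"
  define M where "M = (\<lambda>t i. min (j i) (J t i))"
  define N where "N = length p"
  let ?a = "alpha n d f"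
  have Mg: "M t \<in> grid n d" for t using j by (auto simp: grid_def M_def)
  have Jg: "J t \<in> grid n d" for t using jpt_grid[OF p] by (simp add: J_def)
  have step: "?a (M (Suc s)) - ?a (M s) \<le> (?a (J (Suc s)) - ?a (J s)) * vtx n d j (p!s, J (Suc s) (p!s))"
    if s: "s < N" for s
  proof -
    define i where "i = p!s"
    have JS: "J (Suc s) = (J s)(i := J s i + 1)" using jpt_Suc[of s p] s by (simp add: J_def N_def i_def)
    have co: "(i, J (Suc s) i) \<in> coords n d" using stair_coord[OF p, of s] s by (simp add: J_def N_def i_def)
    show ?thesis
    proof (cases "J s i + 1 \<le> j i")
      case True
      have v1: "vtx n d j (i, J (Suc s) i) = 1" using co True JS by (simp add: vtx_def)
      have e1: "(\<lambda>x. max (J s x) (M (Suc s) x)) = J (Suc s)"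
        using True JS by (auto simp: M_def fun_eq_iff)
      have e2: "(\<lambda>x. min (J s x) (M (Suc s) x)) = M s"
        using True JS by (auto simp: M_def fun_eq_iff)
      have "f (sup (vtx n d (J s)) (vtx n d (M (Suc s)))) + f (inf (vtx n d (J s)) (vtx n d (M (Suc s))))
          \<ge> f (vtx n d (J s)) + f (vtx n d (M (Suc s)))"
        using sm Jg Mg unfolding supermodular_on_vert_def vert_def by blast
      hence "f (vtx n d (J (Suc s))) + f (vtx n d (M s)) \<ge> f (vtx n d (J s)) + f (vtx n d (M (Suc s)))"
        unfolding vtx_sup vtx_inf e1 e2 .
      thus ?thesis using v1 by (simp add: alpha_def i_def)
    next
      case False
      have "M (Suc s) = M s" using False JS by (auto simp: M_def fun_eq_iff)
      moreover have "vtx n d j (i, J (Suc s) i) = 0" using False JS by (simp add: vtx_def)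
      ultimately show ?thesis by (simp add: i_def)
    qed
  qed
  have "(\<Sum>t\<in>{1..N}. ?a (M t) - ?a (M (t-1))) \<le>
        (\<Sum>t\<in>{1..N}. (?a (J t) - ?a (J (t-1))) * vtx n d j (p!(t-1), J t (p!(t-1))))"
  proof (intro sum_mono)
    fix t assume "t \<in> {1..N}"
    then obtain s where "t = Suc s" "s < N" by (cases t) auto
    thus "?a (M t) - ?a (M (t-1)) \<le> (?a (J t) - ?a (J (t-1))) * vtx n d j (p!(t-1), J t (p!(t-1)))"
      using step by simp
  qed
  moreover have "(\<Sum>t\<in>{1..N}. ?a (M t) - ?a (M (t-1))) = ?a (M N) - ?a (M 0)"
    by (rule telescope1)
  moreover have "M N = j"
  proof
    fix i show "M N i = j i"
      using j p by (cases "i < n") (auto simp: M_def J_def N_def jpt_len grid_def staircases_def)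
  qed
  moreover have "M 0 = J 0" by (simp add: M_def J_def jpt_0 fun_eq_iff)
  ultimately show ?thesis by (simp add: fpi_def J_def N_def alpha_def)
qed


lemma coreB:
  assumes z: "z \<in> Delta n d" and mu: "\<forall>p\<in>staircases n d. \<mu> \<le> fpi n d f p z"
  shows "(z, \<mu>) \<in> convex hull {(z, \<mu>). z \<in> vert n d \<and> \<mu> \<le> f z}"
proof -
  have "\<forall>i<n. \<forall>k. 1 \<le> k \<and> k < d i \<longrightarrow> z (i, Suc k) \<le> z (i,k)" using z by (auto simp: Delta_def)
  from greedy[OF this] obtain p where p0: "set p \<subseteq> {..<n}" "\<forall>i<n. count_list p i = d i"
    and mono: "\<forall>t. Suc t < length p \<longrightarrow> z (p!(Suc t), jpt p (Suc (Suc t)) (p!(Suc t))) \<le> z (p!t, jpt p (Suc t) (p!t))"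
    by blast
  have p: "p \<in> staircases n d" using p0 by (simp add: staircases_def)
  define N where "N = length p"
  define J where "J = jpt p"
  define w where "w = (\<lambda>t. if t = 0 then 1 else if t \<le> N then z (p!(t-1), J t (p!(t-1))) else (0::real))"
  define lam where "lam = (\<lambda>t. w t - w (Suc t))"
  define \<delta> where "\<delta> = fpi n d f p z - \<mu>"
  define G where "G = {(z, \<mu>). z \<in> vert n d \<and> \<mu> \<le> f z}"
  define y where "y = (\<lambda>t. (vtx n d (J t), alpha n d f (J t) - \<delta>))"
  have wr: "0 \<le> w t \<and> w t \<le> 1" for t
  proof (cases "t = 0 \<or> t > N")
    case True thus ?thesis by (auto simp: w_def)
  next
    case False
    then obtain s where s: "t = Suc s" "s < N" by (cases t) auto
    show ?thesis using Delta_range[OF z stair_coord[OF p, of s]] s by (simp add: w_def J_def N_def)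
  qed
  have lam0: "0 \<le> lam t" if tN: "t \<in> {0..N}" for t
  proof -
    consider "t = 0" | "t = N" | "0 < t \<and> t < N" using tN by fastforce
    thus ?thesis
    proof cases
      case 1 thus ?thesis using wr[of 1] by (simp add: lam_def w_def)
    next
      case 2 thus ?thesis using wr[of N] by (simp add: lam_def w_def)
    next
      case 3
      then obtain s where s: "t = Suc s" "Suc s < N" by (cases t) auto
      thus ?thesis using mono s by (simp add: lam_def w_def J_def N_def)
    qed
  qed
  have lam1: "sum lam {0..N} = 1"
    using telescope2[of 0 N w] by (simp add: lam_def w_def)
  have yG: "y t \<in> G" for t
    using jpt_grid[OF p, of t] \<delta>_def mu p by (auto simp: y_def G_def vert_def alpha_def J_def)
  have "(\<Sum>t\<in>{0..N}. lam t *\<^sub>R y t) \<in> convex hull G"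
    by (rule convex_sum) (use lam0 lam1 yG hull_inc[of _ G convex] in auto)
  moreover have "(\<Sum>t\<in>{0..N}. lam t *\<^sub>R y t) = (z, \<mu>)"
  proof (rule prod_eqI)
    have "(\<Sum>t\<in>{0..N}. lam t *\<^sub>R vtx n d (J t)) = z"
    proof
      fix x :: "nat \<times> nat"
      obtain i k where x: "x = (i,k)" by force
      show "(\<Sum>t\<in>{0..N}. lam t *\<^sub>R vtx n d (J t)) x = z x"
      proof (cases "(i,k) \<in> coords n d")
        case False
        thus ?thesis using z x by (simp add: sum_fun_apply scaleR_fun_def vtx_def Delta_def)
      next
        case True
        hence ik: "i < n" "1 \<le> k" "k \<le> d i" by (auto simp: coords_def)
        have JN: "k \<le> J N i" using ik p0 by (simp add: J_def N_def jpt_len)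
        define T where "T = (LEAST t. k \<le> J t i)"
        have JT: "k \<le> J T i" unfolding T_def using JN by (rule LeastI)
        have TN: "T \<le> N" unfolding T_def using JN by (rule Least_le)
        have T0: "T \<noteq> 0"
        proof
          assume "T = 0" thus False using JT ik by (simp add: J_def jpt_0)
        qed
        then obtain s where s: "T = Suc s" by (cases T) auto
        have "\<not> k \<le> J s i" unfolding T_def
          using s not_less_Least[of s "\<lambda>t. k \<le> J t i"] by (simp add: T_def)
        moreover have JsS: "J (Suc s) = (J s)(p!s := J s (p!s) + 1)"
          using jpt_Suc[of s p] s TN by (simp add: J_def N_def)
        ultimately have pi: "p!s = i" and Jk: "J T i = k"
          using JT s by (auto split: if_splits)
        have wT: "w T = z (i,k)" using s TN pi Jk by (simp add: w_def)
        have iff: "k \<le> J t i \<longleftrightarrow> T \<le> t" for t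
        proof
          assume "k \<le> J t i" thus "T \<le> t" unfolding T_def by (rule Least_le)
        next
          assume "T \<le> t" thus "k \<le> J t i" using JT jpt_mono[of T t p i] by (simp add: J_def)
        qed
        have "(\<Sum>t\<in>{0..N}. lam t *\<^sub>R vtx n d (J t)) x = (\<Sum>t\<in>{0..N}. if T \<le> t then w t - w (Suc t) else 0)"
          unfolding sum_fun_apply x
          by (intro sum.cong) (use True iff in \<open>auto simp: scaleR_fun_def vtx_def lam_def\<close>)
        also have "\<dots> = w T - w (Suc N)" using TN by (rule telescope2)
        also have "\<dots> = z x" using wT x by (simp add: w_def)
        finally show ?thesis .
      qed
    qed
    thus "fst (\<Sum>t\<in>{0..N}. lam t *\<^sub>R y t) = fst (z, \<mu>)" by (simp add: fst_sum y_def)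
    have "(\<Sum>t\<in>{0..N}. lam t * alpha n d f (J t)) =
          w 0 * alpha n d f (J 0) + (\<Sum>t\<in>{1..N}. (alpha n d f (J t) - alpha n d f (J (t-1))) * w t) - w (Suc N) * alpha n d f (J N)"
      unfolding lam_def by (rule abel)
    also have "\<dots> = fpi n d f p z"
      unfolding fpi_def by (simp add: w_def J_def N_def)
    finally have "(\<Sum>t\<in>{0..N}. lam t * alpha n d f (J t)) = fpi n d f p z" .
    hence "(\<Sum>t\<in>{0..N}. lam t * (alpha n d f (J t) - \<delta>)) = \<mu>"
      using lam1 by (simp add: right_diff_distrib sum_subtractf flip: sum_distrib_right) (simp add: \<delta>_def)
    thus "snd (\<Sum>t\<in>{0..N}. lam t *\<^sub>R y t) = snd (z, \<mu>)" by (simp add: snd_sum y_def)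
  qed
  ultimately show ?thesis by (simp add: G_def)
qed


lemma sum_comb: "(\<Sum>t\<in>A. a t * (u * X t + v * Y t)) = u * (\<Sum>t\<in>A. a t * X t) + v * (\<Sum>t\<in>A. a t * (Y t::real))"
  by (simp add: sum_distrib_left distrib_left mult.left_commute sum.distrib)

lemma fpi_comb: assumes "u + v = 1" shows "fpi n d f p (u *\<^sub>R x + v *\<^sub>R y) = u * fpi n d f p x + v * fpi n d f p y"
proof -
  let ?c = "alpha n d f (jpt p 0)"
  let ?a = "\<lambda>t. alpha n d f (jpt p t) - alpha n d f (jpt p (t - 1))"
  let ?q = "\<lambda>t. (p ! (t - 1), jpt p t (p ! (t - 1)))"
  have "fpi n d f p (u *\<^sub>R x + v *\<^sub>R y) = ?c + (\<Sum>t\<in>{1..length p}. ?a t * (u * x (?q t) + v * y (?q t)))"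
    by (simp add: fpi_def scaleR_fun_def plus_fun_def)
  also have "\<dots> = (u + v) * ?c + u * (\<Sum>t\<in>{1..length p}. ?a t * x (?q t)) + v * (\<Sum>t\<in>{1..length p}. ?a t * y (?q t))"
    unfolding sum_comb using assms by simp
  also have "\<dots> = u * fpi n d f p x + v * fpi n d f p y"
    by (simp add: fpi_def algebra_simps)
  finally show ?thesis .
qed

lemma convex_rhs: "convex {(z, \<mu>). z \<in> Delta n d \<and> (\<forall>p\<in>staircases n d. \<mu> \<le> fpi n d f p z)}"
proof (rule convexI)
  fix a b and u v :: real
  assume a: "a \<in> {(z, \<mu>). z \<in> Delta n d \<and> (\<forall>p\<in>staircases n d. \<mu> \<le> fpi n d f p z)}"
    and b: "b \<in> {(z, \<mu>). z \<in> Delta n d \<and> (\<forall>p\<in>staircases n d. \<mu> \<le> fpi n d f p z)}"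
    and uv: "0 \<le> u" "0 \<le> v" "u + v = 1"
  obtain x \<mu> where ab1: "a = (x, \<mu>)" by force
  obtain y \<nu> where ab2: "b = (y, \<nu>)" by force
  have x: "x \<in> Delta n d" "\<forall>p\<in>staircases n d. \<mu> \<le> fpi n d f p x" using a ab1 by auto
  have y: "y \<in> Delta n d" "\<forall>p\<in>staircases n d. \<nu> \<le> fpi n d f p y" using b ab2 by auto
  have "u *\<^sub>R x + v *\<^sub>R y \<in> Delta n d"
  proof -
    have A: "\<And>a b. a \<le> b \<Longrightarrow> u * a \<le> u * b" "\<And>a b. a \<le> b \<Longrightarrow> v * a \<le> v * b"
      using uv by (auto intro: mult_left_mono)
    have ev: "(u *\<^sub>R x + v *\<^sub>R y) q = u * x q + v * y q" for q
      by (simp add: scaleR_fun_def plus_fun_def)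
    have c1: "\<forall>q. q \<notin> coords n d \<longrightarrow> (u *\<^sub>R x + v *\<^sub>R y) q = 0"
      using x(1) y(1) by (simp add: Delta_def scaleR_fun_def plus_fun_def)
    have c2: "1 \<ge> (u *\<^sub>R x + v *\<^sub>R y) (i,1) \<and> (\<forall>k. 1 \<le> k \<and> k < d i \<longrightarrow> (u *\<^sub>R x + v *\<^sub>R y) (i,k) \<ge> (u *\<^sub>R x + v *\<^sub>R y) (i,Suc k))
       \<and> (u *\<^sub>R x + v *\<^sub>R y) (i, d i) \<ge> 0" if i: "i < n" for i
    proof (intro conjI allI impI)
      have "x (i,1) \<le> 1" "y (i,1) \<le> 1" using x(1) y(1) i by (auto simp: Delta_def)
      hence "u * x (i,1) \<le> u * 1" "v * y (i,1) \<le> v * 1" using A by blast+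
      thus "1 \<ge> (u *\<^sub>R x + v *\<^sub>R y) (i,1)" using uv(3) by (simp add: scaleR_fun_def plus_fun_def)
    next
      fix k assume k: "1 \<le> k \<and> k < d i"
      have "x (i,Suc k) \<le> x (i,k)" "y (i,Suc k) \<le> y (i,k)" using x(1) y(1) i k by (auto simp: Delta_def)
      hence "u * x (i,Suc k) \<le> u * x (i,k)" "v * y (i,Suc k) \<le> v * y (i,k)" using A by blast+
      thus "(u *\<^sub>R x + v *\<^sub>R y) (i,k) \<ge> (u *\<^sub>R x + v *\<^sub>R y) (i,Suc k)" by (simp add: scaleR_fun_def plus_fun_def)
    next
      have "0 \<le> x (i,d i)" "0 \<le> y (i,d i)" using x(1) y(1) i by (auto simp: Delta_def)
      hence "u * 0 \<le> u * x (i,d i)" "v * 0 \<le> v * y (i,d i)" using A by blast+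
      thus "(u *\<^sub>R x + v *\<^sub>R y) (i, d i) \<ge> 0" by (simp add: scaleR_fun_def plus_fun_def)
    qed
    show ?thesis using c1 c2 unfolding Delta_def by blast
  qed
  moreover have "u * \<mu> + v * \<nu> \<le> fpi n d f p (u *\<^sub>R x + v *\<^sub>R y)" if "p \<in> staircases n d" for p
    using fpi_comb[OF uv(3)] x(2) y(2) that uv
    by (simp add: add_mono mult_left_mono)
  ultimately show "(u *\<^sub>R a + v *\<^sub>R b) \<in> {(z, \<mu>). z \<in> Delta n d \<and> (\<forall>p\<in>staircases n d. \<mu> \<le> fpi n d f p z)}"
    by (simp add: ab1 ab2)
qed

lemma super_case:
  assumes sm: "supermodular_on_vert n d f"
  shows "convex hull {(z, \<mu>). z \<in> vert n d \<and> \<mu> \<le> f z} =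
           {(z, \<mu>). z \<in> Delta n d \<and> (\<forall>p\<in>staircases n d. \<mu> \<le> fpi n d f p z)}"
proof
  show "convex hull {(z, \<mu>). z \<in> vert n d \<and> \<mu> \<le> f z} \<subseteq> {(z, \<mu>). z \<in> Delta n d \<and> (\<forall>p\<in>staircases n d. \<mu> \<le> fpi n d f p z)}"
  proof (rule hull_minimal)
    show "convex {(z, \<mu>). z \<in> Delta n d \<and> (\<forall>p\<in>staircases n d. \<mu> \<le> fpi n d f p z)}"
      by (rule convex_rhs)
  next
    show "{(z, \<mu>). z \<in> vert n d \<and> \<mu> \<le> f z} \<subseteq> {(z, \<mu>). z \<in> Delta n d \<and> (\<forall>p\<in>staircases n d. \<mu> \<le> fpi n d f p z)}"
    proof clarify
    fix z \<mu> assume "z \<in> vert n d" "\<mu> \<le> f z"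
    then obtain j where j: "j \<in> grid n d" "z = vtx n d j" by (auto simp: vert_def)
    show "z \<in> Delta n d \<and> (\<forall>p\<in>staircases n d. \<mu> \<le> fpi n d f p z)"
      using coreA[OF sm _ j(1)] j vtx_Delta \<open>\<mu> \<le> f z\<close> by (auto intro: order_trans)
    qed
  qed
  show "{(z, \<mu>). z \<in> Delta n d \<and> (\<forall>p\<in>staircases n d. \<mu> \<le> fpi n d f p z)} \<subseteq> convex hull {(z, \<mu>). z \<in> vert n d \<and> \<mu> \<le> f z}"
    using coreB by auto
qed

lemma neg_img: "(\<lambda>(z,\<mu>). (z, -\<mu>::real)) ` {(z,\<mu>). P z \<mu>} = {(z,\<mu>). P z (-\<mu>)}"
proof
  show "(\<lambda>(z,\<mu>). (z, -\<mu>::real)) ` {(z,\<mu>). P z \<mu>} \<subseteq> {(z,\<mu>). P z (-\<mu>)}" by auto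
  show "{(z,\<mu>). P z (-\<mu>)} \<subseteq> (\<lambda>(z,\<mu>). (z, -\<mu>::real)) ` {(z,\<mu>). P z \<mu>}"
  proof clarify
    fix z \<mu> assume "P z (-\<mu>)"
    thus "(z, \<mu>) \<in> (\<lambda>(z,\<mu>). (z, -\<mu>::real)) ` {(z,\<mu>). P z \<mu>}"
      by (intro image_eqI[of _ _ "(z, -\<mu>)"]) auto
  qed
qed

lemma lin_neg: "linear (\<lambda>(z,\<mu>). (z::'a::real_vector, -\<mu>::real))"
  by (rule linearI) (auto simp: case_prod_beta)

lemma fpi_neg: "fpi n d (\<lambda>z. - f z) p z = - fpi n d f p z"
  unfolding fpi_def alpha_def by (simp add: sum_negf[symmetric] algebra_simps)

lemma sub_case:
  assumes sm: "submodular_on_vert n d f"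
  shows "convex hull {(z, \<mu>). z \<in> vert n d \<and> \<mu> \<ge> f z} =
           {(z, \<mu>). z \<in> Delta n d \<and> (\<forall>p\<in>staircases n d. \<mu> \<ge> fpi n d f p z)}"
proof -
  let ?g = "\<lambda>z. - f z"
  let ?h = "\<lambda>(z,\<mu>). (z::nat \<times> nat \<Rightarrow> real, -\<mu>::real)"
  have sg: "supermodular_on_vert n d ?g"
    unfolding supermodular_on_vert_def
  proof (intro ballI)
    fix u w assume "u \<in> vert n d" "w \<in> vert n d"
    with sm have "f (sup u w) + f (inf u w) \<le> f u + f w" by (simp add: submodular_on_vert_def)
    thus "- f u + - f w \<le> - f (sup u w) + - f (inf u w)" by linarith
  qed
  have eq: "{(z, \<mu>). z \<in> vert n d \<and> \<mu> \<ge> f z} = ?h ` {(z, \<mu>). z \<in> vert n d \<and> \<mu> \<le> ?g z}"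
    by (subst neg_img) auto
  have "convex hull {(z, \<mu>). z \<in> vert n d \<and> \<mu> \<ge> f z} = ?h ` (convex hull {(z, \<mu>). z \<in> vert n d \<and> \<mu> \<le> ?g z})"
    unfolding eq by (rule convex_hull_linear_image[OF lin_neg, symmetric])
  also have "\<dots> = ?h ` {(z, \<mu>). z \<in> Delta n d \<and> (\<forall>p\<in>staircases n d. \<mu> \<le> fpi n d ?g p z)}"
    using super_case[OF sg] by simp
  also have "\<dots> = {(z, \<mu>). z \<in> Delta n d \<and> (\<forall>p\<in>staircases n d. \<mu> \<ge> fpi n d f p z)}"
    by (subst neg_img) (auto simp: fpi_neg)
  finally show ?thesis .
qed

theorem mainTheorem12:
  fixes n :: nat and d :: "nat \<Rightarrow> nat" and f :: "(nat \<times> nat \<Rightarrow> real) \<Rightarrow> real"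
  assumes "\<forall>i<n. d i \<ge> 1"
  shows "(supermodular_on_vert n d f \<longrightarrow>
           convex hull {(z, \<mu>). z \<in> vert n d \<and> \<mu> \<le> f z} =
           {(z, \<mu>). z \<in> Delta n d \<and> (\<forall>p\<in>staircases n d. \<mu> \<le> fpi n d f p z)})
       \<and> (submodular_on_vert n d f \<longrightarrow>
           convex hull {(z, \<mu>). z \<in> vert n d \<and> \<mu> \<ge> f z} =
           {(z, \<mu>). z \<in> Delta n d \<and> (\<forall>p\<in>staircases n d. \<mu> \<ge> fpi n d f p z)})"
  using super_case sub_case by blast

end
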